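(* Let $G$ act on a countable set $X$, $R\subseteq G$ a subgroup, and $(b,c)$ a connected graph over $X$ such that $H=H_{b,c}$ is $R$-invariant. Then for all $x,y\in X$ there exists $C_{x,y}>0$ such that $T_gf(x)\ge C_{x,y}\,T_gf(y)$ for every $f\in\mathcal{S}^+$ and every $g\in R$.
   Context: A graph over $X$ is $(b,c)$ with $b:X\times X\to[0,\infty)$, $c:X\to\mathbb{R}$, $\sum_yb(x,y)<\infty$ ($b$ need not be symmetric); connected: any $x,z$ are joined by a finite sequence $y_1,\dots,y_n$ with $b(y_i,y_{i+1})>0$. $H_{b,c}f(x)=\sum_yb(x,y)(f(x)-f(y))+c(x)f(x)$ on $\mathrm{Dom}(H)=\{f:\sum_yb(x,y)|f(y)|<\infty\ \forall x\}$. $\mathcal{S}^+$ is the set of nonnegative, not identically zero $f\in\mathrm{Dom}(H)$ with $Hf\ge0$. $T_gf(x)=f(g^{-1}x)$; $H$ is $R$-invariant if $T_g$ preserves $\mathrm{Dom}(H)$ and $HT_g=T_gH$ for $g\in R$. *)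

theory Defs
  imports "HOL-Analysis.Analysis" "HOL-Algebra.Group_Action"
begin

text \<open>A graph (b,c) over the vertex type 'x (the whole type plays the role of X).\<close>
definition is_graph :: "('x \<Rightarrow> 'x \<Rightarrow> real) \<Rightarrow> ('x \<Rightarrow> real) \<Rightarrow> bool" where
  "is_graph b c \<longleftrightarrow> (\<forall>x y. b x y \<ge> 0) \<and> (\<forall>x. (\<lambda>y. b x y) summable_on UNIV)"

definition graph_connected :: "('x \<Rightarrow> 'x \<Rightarrow> real) \<Rightarrow> bool" where
  "graph_connected b \<longleftrightarrow> (\<forall>x z. (\<lambda>u v. b u v > 0)\<^sup>*\<^sup>* x z)"

definition dom_H :: "('x \<Rightarrow> 'x \<Rightarrow> real) \<Rightarrow> ('x \<Rightarrow> real) set" where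
  "dom_H b = {f. \<forall>x. (\<lambda>y. b x y * \<bar>f y\<bar>) summable_on UNIV}"

definition H_op :: "('x \<Rightarrow> 'x \<Rightarrow> real) \<Rightarrow> ('x \<Rightarrow> real) \<Rightarrow> ('x \<Rightarrow> real) \<Rightarrow> 'x \<Rightarrow> real" where
  "H_op b c f x = (\<Sum>\<^sub>\<infinity>y. b x y * (f x - f y)) + c x * f x"

definition S_plus :: "('x \<Rightarrow> 'x \<Rightarrow> real) \<Rightarrow> ('x \<Rightarrow> real) \<Rightarrow> ('x \<Rightarrow> real) set" where
  "S_plus b c = {f. f \<in> dom_H b \<and> (\<forall>x. f x \<ge> 0) \<and> (\<exists>x. f x \<noteq> 0) \<and> (\<forall>x. H_op b c f x \<ge> 0)}"

definition T_act :: "('g, 'm) monoid_scheme \<Rightarrow> ('g \<Rightarrow> 'x \<Rightarrow> 'x) \<Rightarrow> 'g \<Rightarrow> ('x \<Rightarrow> real) \<Rightarrow> 'x \<Rightarrow> real" where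
  "T_act G \<phi> g f x = f (\<phi> (inv\<^bsub>G\<^esub> g) x)"

definition R_invariant :: "('g, 'm) monoid_scheme \<Rightarrow> ('g \<Rightarrow> 'x \<Rightarrow> 'x) \<Rightarrow> 'g set
    \<Rightarrow> ('x \<Rightarrow> 'x \<Rightarrow> real) \<Rightarrow> ('x \<Rightarrow> real) \<Rightarrow> bool" where
  "R_invariant G \<phi> R b c \<longleftrightarrow> (\<forall>g\<in>R. \<forall>f\<in>dom_H b.
      T_act G \<phi> g f \<in> dom_H b \<and> H_op b c (T_act G \<phi> g f) = T_act G \<phi> g (H_op b c f))"

end

theory Submission
  imports Defs
begin

lemma harnack_edge:
  fixes b :: "'x \<Rightarrow> 'x \<Rightarrow> real" and c :: "'x \<Rightarrow> real"
  assumes gr: "is_graph b c" and fd: "f \<in> dom_H b" and fnn: "\<forall>z. f z \<ge> 0"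
    and Hp: "\<forall>z. H_op b c f z \<ge> 0" and bxy: "b x y > 0"
  shows "f x \<ge> b x y / (\<bar>infsum (b x) UNIV + c x\<bar> + 1) * f y"
proof -
  define d where "d = infsum (b x) UNIV"
  have s1: "(\<lambda>z. b x z) summable_on UNIV" using gr unfolding is_graph_def by blast
  have s2: "(\<lambda>z. b x z * f z) summable_on UNIV"
    using fd fnn unfolding dom_H_def by (simp add: abs_of_nonneg)
  have bnn: "\<And>z. b x z \<ge> 0" using gr unfolding is_graph_def by blast
  have "(\<Sum>\<^sub>\<infinity>z. b x z * (f x - f z)) = (\<Sum>\<^sub>\<infinity>z. b x z * f x + - (b x z * f z))"
    by (simp add: algebra_simps)
  also have "\<dots> = (\<Sum>\<^sub>\<infinity>z. b x z * f x) + (\<Sum>\<^sub>\<infinity>z. - (b x z * f z))"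
    by (rule infsum_add) (use s1 s2 summable_on_cmult_left summable_on_uminus[of "\<lambda>z. b x z * f z"] in auto)
  also have "\<dots> = d * f x - (\<Sum>\<^sub>\<infinity>z. b x z * f z)"
    by (simp add: infsum_cmult_left[OF s1] infsum_uminus d_def)
  finally have eq: "(\<Sum>\<^sub>\<infinity>z. b x z * (f x - f z)) = d * f x - (\<Sum>\<^sub>\<infinity>z. b x z * f z)" .
  have ge: "(\<Sum>\<^sub>\<infinity>z. b x z * f z) \<ge> b x y * f y"
  proof -
    have "infsum (\<lambda>z. b x z * f z) {y} \<le> infsum (\<lambda>z. b x z * f z) UNIV"
      by (rule infsum_mono2) (use s2 bnn fnn in auto)
    then show ?thesis by simp
  qed
  have key: "(d + c x) * f x \<ge> b x y * f y"
    using Hp[rule_format, of x] eq ge unfolding H_op_def by (simp add: algebra_simps)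
  show ?thesis
  proof (cases "d + c x > 0")
    case True
    have "b x y / (\<bar>d + c x\<bar> + 1) * f y \<le> b x y / (d + c x) * f y"
      using True bxy fnn by (intro mult_right_mono divide_left_mono) auto
    also have "\<dots> \<le> f x" using key True by (simp add: field_simps)
    finally show ?thesis by (simp add: d_def)
  next
    case False
    have "(d + c x) * f x \<le> 0" using False fnn by (simp add: mult_nonpos_nonneg)
    with key have "b x y * f y \<le> 0" by linarith
    with bxy fnn have "f y = 0" by (smt (verit) mult_pos_pos)
    then show ?thesis using fnn by simp
  qed
qed

lemma harnack_path:
  fixes b :: "'x \<Rightarrow> 'x \<Rightarrow> real" and c :: "'x \<Rightarrow> real"
  assumes gr: "is_graph b c" and p: "(\<lambda>u v. b u v > 0)\<^sup>*\<^sup>* x z"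
  shows "\<exists>C>0. \<forall>f. f \<in> dom_H b \<and> (\<forall>z. f z \<ge> 0) \<and> (\<forall>z. H_op b c f z \<ge> 0) \<longrightarrow> f x \<ge> C * f z"
  using p
proof (induction rule: converse_rtranclp_induct)
  case base
  then show ?case by (intro exI[of _ 1]) auto
next
  case (step x y)
  then obtain C where C: "C > 0" "\<forall>f. f \<in> dom_H b \<and> (\<forall>z. f z \<ge> 0) \<and> (\<forall>z. H_op b c f z \<ge> 0) \<longrightarrow> f y \<ge> C * f z" by blast
  define D where "D = b x y / (\<bar>infsum (b x) UNIV + c x\<bar> + 1)"
  have D: "D > 0" using step(1) unfolding D_def by (simp add: add_pos_nonneg)
  show ?case
  proof (intro exI[of _ "D * C"] conjI allI impI)
    show "D * C > 0" using C D by simp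
    fix f :: "'x \<Rightarrow> real" assume a: "f \<in> dom_H b \<and> (\<forall>z. f z \<ge> 0) \<and> (\<forall>z. H_op b c f z \<ge> 0)"
    have "f x \<ge> D * f y" unfolding D_def using harnack_edge[OF gr _ _ _ step(1)] a by blast
    moreover have "f y \<ge> C * f z" using C a by blast
    ultimately show "f x \<ge> D * C * f z"
      using D by (smt (verit) mult.assoc mult_left_mono)
  qed
qed

theorem lemma2:
  fixes G :: "('g, 'm) monoid_scheme" and \<phi> :: "'g \<Rightarrow> 'x \<Rightarrow> 'x"
    and R :: "'g set" and b :: "'x \<Rightarrow> 'x \<Rightarrow> real" and c :: "'x \<Rightarrow> real"
  assumes "group_action G (UNIV :: 'x set) \<phi>"
    and "countable (UNIV :: 'x set)"
    and "subgroup R G"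
    and "is_graph b c"
    and "graph_connected b"
    and "R_invariant G \<phi> R b c"
  shows "\<forall>x y. \<exists>C>0. \<forall>f\<in>S_plus b c. \<forall>g\<in>R.
           T_act G \<phi> g f x \<ge> C * T_act G \<phi> g f y"
proof (intro allI)
  fix x y
  have p: "(\<lambda>u v. b u v > 0)\<^sup>*\<^sup>* x y" using assms(5) unfolding graph_connected_def by blast
  obtain C where C: "C > 0" "\<forall>f. f \<in> dom_H b \<and> (\<forall>z. f z \<ge> 0) \<and> (\<forall>z. H_op b c f z \<ge> 0) \<longrightarrow> f x \<ge> C * f y"
    using harnack_path[OF assms(4) p] by blast
  show "\<exists>C>0. \<forall>f\<in>S_plus b c. \<forall>g\<in>R. T_act G \<phi> g f x \<ge> C * T_act G \<phi> g f y"
  proof (intro exI[of _ C] conjI ballI)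
    show "C > 0" by fact
    fix f g assume f: "f \<in> S_plus b c" and g: "g \<in> R"
    have inv: "T_act G \<phi> g f \<in> dom_H b \<and> H_op b c (T_act G \<phi> g f) = T_act G \<phi> g (H_op b c f)"
      using assms(6) f g unfolding R_invariant_def S_plus_def by blast
    have "T_act G \<phi> g f \<in> dom_H b \<and> (\<forall>z. T_act G \<phi> g f z \<ge> 0) \<and> (\<forall>z. H_op b c (T_act G \<phi> g f) z \<ge> 0)"
      using inv f unfolding S_plus_def T_act_def by auto
    then show "T_act G \<phi> g f x \<ge> C * T_act G \<phi> g f y" using C by blast
  qed
qed

end
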